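(* Let $q$ be a prime power and $1\le k\le n-1$. If there exists a Cameron-Liebler $k$-set with parameter $x$ in $\mathrm{AG}(n,q)$, then there exists a Cameron-Liebler $k$-set of parameter $x+\frac{q^{n-k}-1}{q^{k+1}-1}$ in the projective closure $\mathrm{PG}(n,q)$ of $\mathrm{AG}(n,q)$.
   Context: A $k$-space is a $k$-dimensional projective subspace. $\left[{a\atop b}\right]_q=\frac{(q^a-1)\cdots(q^{a-b+1}-1)}{(q^b-1)\cdots(q-1)}$. $\mathrm{AG}(n,q)$ is $\mathrm{PG}(n,q)$ with a hyperplane $\pi_\infty$ removed; affine points are points outside $\pi_\infty$, affine $k$-spaces are $k$-spaces not contained in $\pi_\infty$. Let $P_n$ be the point-($k$-space) incidence matrix of $\mathrm{PG}(n,q)$ and $A_n$ the incidence matrix of affine points versus affine $k$-spaces. A set $\mathcal{L}$ of $k$-spaces of $\mathrm{PG}(n,q)$ is a Cameron-Liebler $k$-set of $\mathrm{PG}(n,q)$ if its characteristic vector lies in the real row space $\mathrm{Im}(P_n^T)$, with parameter $|\mathcal{L}|/\left[{n\atop k}\right]_q$; a set of affine $k$-spaces is a Cameron-Liebler $k$-set of $\mathrm{AG}(n,q)$ if its characteristic vector lies in $\mathrm{Im}(A_n^T)$, with parameter $|\mathcal{L}|/\left[{n\atop k}\right]_q$. *)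

theory Defs
  imports "HOL-Analysis.Analysis"
begin

text \<open>PG(n,q) is modelled as the lattice of subspaces of the vector space 'a^'n over a
finite field 'a with CARD('a) = q and CARD('n) = n+1. A projective m-space is a
vector subspace of (vector) dimension m+1.\<close>

definition proj_spaces :: "nat \<Rightarrow> ('a::field ^ 'n) set set" where
  "proj_spaces m = {S. vec.subspace S \<and> vec.dim S = Suc m}"

abbreviation proj_points :: "('a::field ^ 'n) set set" where
  "proj_points \<equiv> proj_spaces 0"

definition gauss_binom :: "real \<Rightarrow> nat \<Rightarrow> nat \<Rightarrow> real" where
  "gauss_binom q a b = (\<Prod>i<b. q ^ (a - i) - 1) / (\<Prod>i<b. q ^ (i + 1) - 1)"

text \<open>Characteristic vector of L lies in the real row space of the point-(k-space)
incidence matrix of PG(n,q): it is a real linear combination of the rows.\<close>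
definition CL_proj :: "nat \<Rightarrow> ('a::field ^ 'n) set set \<Rightarrow> bool" where
  "CL_proj k L \<longleftrightarrow> L \<subseteq> proj_spaces k \<and>
     (\<exists>f :: ('a ^ 'n) set \<Rightarrow> real. \<forall>K \<in> proj_spaces k.
        (if K \<in> L then 1 else 0) = (\<Sum>p \<in> {p \<in> proj_points. p \<subseteq> K}. f p))"

text \<open>Affine points / affine k-spaces w.r.t. the hyperplane at infinity H.\<close>
definition aff_spaces :: "('a::field ^ 'n) set \<Rightarrow> nat \<Rightarrow> ('a ^ 'n) set set" where
  "aff_spaces H m = {S \<in> proj_spaces m. \<not> S \<subseteq> H}"

definition CL_aff :: "('a::field ^ 'n) set \<Rightarrow> nat \<Rightarrow> ('a ^ 'n) set set \<Rightarrow> bool" where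
  "CL_aff H k L \<longleftrightarrow> L \<subseteq> aff_spaces H k \<and>
     (\<exists>f :: ('a ^ 'n) set \<Rightarrow> real. \<forall>K \<in> aff_spaces H k.
        (if K \<in> L then 1 else 0) = (\<Sum>p \<in> {p \<in> aff_spaces H 0. p \<subseteq> K}. f p))"

end

theory Submission
  imports Defs
begin

lemma card_span_indep:
  fixes B :: "('a::{field,finite} ^ 'n) set"
  assumes "vec.independent B"
  shows "card (vec.span B) = CARD('a) ^ card B"
proof -
  have "finite B" by simp
  then show ?thesis using assms
  proof (induction B rule: finite_induct)
    case empty
    then show ?case by (simp add: vec.span_empty)
  next
    case (insert v B)
    have iB: "vec.independent B" and vB: "v \<notin> vec.span B"
      using insert.prems insert.hyps(2) by (simp_all add: vec.independent_insert)
    have eq: "vec.span (insert v B) = (\<lambda>(a,w). a *s v + w) ` (UNIV \<times> vec.span B)"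
    proof safe
      fix x assume "x \<in> vec.span (insert v B)"
      then obtain a where "x - a *s v \<in> vec.span B" by (auto simp: vec.span_insert)
      then show "x \<in> (\<lambda>(a,w). a *s v + w) ` (UNIV \<times> vec.span B)"
        by (intro image_eqI[of _ _ "(a, x - a *s v)"]) auto
    next
      fix a w assume "w \<in> vec.span B"
      then show "a *s v + w \<in> vec.span (insert v B)"
        by (meson insertI1 subset_insertI vec.span_add vec.span_base vec.span_mono vec.span_scale subsetD)
    qed
    have inj: "inj_on (\<lambda>(a,w). a *s v + w) (UNIV \<times> vec.span B)"
    proof (rule inj_onI, clarify)
      fix a w a' w' assume w: "w \<in> vec.span B" "w' \<in> vec.span B" and e: "a *s v + w = a' *s v + w'"
      show "a = a' \<and> w = w'"
      proof (cases "a = a'")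
        case True then show ?thesis using e by simp
      next
        case False
        have "(a - a') *s v = w' - w" using e by (simp add: algebra_simps vec.scale_left_diff_distrib)
        hence "inverse (a - a') *s ((a - a') *s v) \<in> vec.span B"
          using w by (simp add: vec.span_diff vec.span_scale)
        moreover have "inverse (a - a') *s ((a - a') *s v) = v"
        proof -
          have "inverse (a - a') * (a - a') = 1" using False by simp
          then show ?thesis by (metis vec.scale_scale vec.scale_one)
        qed
        ultimately have "v \<in> vec.span B" by simp
        then show ?thesis using vB by simp
      qed
    qed
    have "card (vec.span (insert v B)) = CARD('a) * card (vec.span B)"
      unfolding eq card_image[OF inj] by (simp add: card_cartesian_product)
    then show ?case using insert.IH[OF iB] insert.hyps by simp
  qed
qed

lemma card_subspace:
  fixes S :: "('a::{field,finite} ^ 'n) set"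
  assumes "vec.subspace S"
  shows "card S = CARD('a) ^ vec.dim S"
proof -
  obtain B where B: "B \<subseteq> S" "vec.independent B" "S \<subseteq> vec.span B" "card B = vec.dim S"
    using vec.basis_exists by blast
  have "vec.span B = S" using B assms by (simp add: vec.span_subspace)
  then show ?thesis using card_span_indep[OF B(2)] B(4) by simp
qed

lemma point_span:
  fixes v :: "'a::{field,finite} ^ 'n"
  assumes "v \<noteq> 0"
  shows "vec.span {v} \<in> proj_points"
proof -
  have "vec.independent {v}" using assms by simp
  then have "vec.dim (vec.span {v}) = 1" by (simp add: vec.dim_span_eq_card_independent)
  then show ?thesis by (simp add: proj_spaces_def)
qed

lemma point_eq_span:
  fixes p :: "('a::{field,finite} ^ 'n) set"
  assumes "p \<in> proj_points" "v \<in> p" "v \<noteq> 0"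
  shows "p = vec.span {v}"
proof -
  have sp: "vec.subspace p" "vec.dim p = 1" using assms(1) by (auto simp: proj_spaces_def)
  have "vec.span {v} \<subseteq> p" using assms(2) sp by (simp add: vec.span_minimal)
  moreover have "vec.dim (vec.span {v}) = 1" using assms(3)
    by (simp add: vec.dim_span_eq_card_independent)
  ultimately show ?thesis using sp vec.subspace_dim_equal[of "vec.span {v}" p] by simp
qed

lemma card_points_in:
  fixes S :: "('a::{field,finite} ^ 'n) set"
  assumes "vec.subspace S"
  shows "card {p \<in> (proj_points :: ('a ^ 'n) set set). p \<subseteq> S} * (CARD('a) - 1) = card S - 1"
proof -
  define P where "P = {p \<in> (proj_points :: ('a ^ 'n) set set). p \<subseteq> S}"
  have cover: "S - {0} = (\<Union>p\<in>P. p - {0})"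
  proof
    show "S - {0} \<subseteq> (\<Union>p\<in>P. p - {0})"
    proof
      fix v assume "v \<in> S - {0}"
      then show "v \<in> (\<Union>p\<in>P. p - {0})" using point_span[of v] assms
        by (intro UN_I[of "vec.span {v}"]) (auto simp: P_def vec.span_minimal vec.span_base)
    qed
  qed (auto simp: P_def)
  have disj: "\<forall>p\<in>P. \<forall>p'\<in>P. p \<noteq> p' \<longrightarrow> (p - {0}) \<inter> (p' - {0}) = {}"
    using point_eq_span unfolding P_def by blast
  have cp: "card (p - {0}) = CARD('a) - 1" if "p \<in> P" for p
  proof -
    have "vec.subspace p" "vec.dim p = 1" using that by (auto simp: P_def proj_spaces_def)
    then have "card p = CARD('a)" "0 \<in> p" using card_subspace[of p] by (auto simp: vec.subspace_0)
    then show ?thesis by simp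
  qed
  have "card (S - {0}) = (\<Sum>p\<in>P. card (p - {0}))"
    unfolding cover by (rule card_UN_disjoint) (use disj in auto)
  also have "\<dots> = card P * (CARD('a) - 1)" using cp by simp
  finally show ?thesis using assms vec.subspace_0[OF assms] by (simp add: P_def)
qed

lemma dim_inter_hyperplane:
  fixes K H :: "('a::{field,finite} ^ 'n) set"
  assumes "CARD('n) = Suc n" "vec.subspace K" "vec.subspace H" "vec.dim H = n" "\<not> K \<subseteq> H"
  shows "vec.dim (K \<inter> H) + 1 = vec.dim K"
proof -
  define M where "M = {x + y |x y. x \<in> K \<and> y \<in> H}"
  have sM: "vec.subspace M" unfolding M_def using assms(2,3) by (rule vec.subspace_sums)
  have HM: "H \<subseteq> M" unfolding M_def using vec.subspace_0[OF assms(2)] by force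
  obtain z where z: "z \<in> K" "z \<notin> H" using assms(5) by blast
  have "z \<in> M" unfolding M_def using z vec.subspace_0[OF assms(3)] by force
  then have "H \<subset> M" using HM z by blast
  moreover have e: "vec.span H = H" "vec.span M = M" using sM assms(3) by (simp_all add: vec.span_eq_iff)
  ultimately have "vec.span H \<subset> vec.span M" by (simp only: e)
  then have "vec.dim H < vec.dim M" by (rule vec.dim_psubset)
  moreover have "vec.dim M \<le> CARD('n)" by (rule dim_subset_UNIV_cart_gen)
  ultimately have "vec.dim M = Suc n" using assms by simp
  moreover have "vec.dim M + vec.dim (K \<inter> H) = vec.dim K + vec.dim H"
    unfolding M_def using assms(2,3) by (rule vec.dim_sums_Int)
  ultimately show ?thesis using assms by simp
qed

definition IL :: "('a::field ^ 'n) set \<Rightarrow> nat \<Rightarrow> ('a ^ 'n) list set" where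
  "IL V m = {xs. length xs = m \<and> distinct xs \<and> set xs \<subseteq> V \<and> vec.independent (set xs)}"

lemma card_IL:
  fixes V :: "('a::{field,finite} ^ 'n) set"
  assumes "vec.subspace V"
  shows "card (IL V m) = (\<Prod>i<m. CARD('a) ^ vec.dim V - CARD('a) ^ i)"
proof (induction m)
  case 0
  have "IL V 0 = {[]}" by (auto simp: IL_def vec.independent_empty)
  then show ?case by simp
next
  case (Suc m)
  define q where "q = CARD('a)"
  have eq: "IL V (Suc m) = (\<lambda>(xs,v). xs @ [v]) ` (SIGMA xs:IL V m. V - vec.span (set xs))"
  proof safe
    fix ys assume ys: "ys \<in> IL V (Suc m)"
    then have ne: "ys \<noteq> []" by (auto simp: IL_def)
    define xs where "xs = butlast ys"
    define v where "v = last ys"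
    have yv: "ys = xs @ [v]" using ne by (simp add: xs_def v_def)
    have "vec.independent (insert v (set xs))" "v \<notin> set xs" "distinct xs" "length xs = m"
         "set xs \<subseteq> V" "v \<in> V"
      using ys unfolding IL_def yv by auto
    then have "xs \<in> IL V m" "v \<in> V - vec.span (set xs)"
      by (auto simp: IL_def vec.independent_insert)
    then show "ys \<in> (\<lambda>(xs,v). xs @ [v]) ` (SIGMA xs:IL V m. V - vec.span (set xs))"
      using yv by force
  next
    fix xs v assume "xs \<in> IL V m" "v \<in> V" "v \<notin> vec.span (set xs)"
    moreover then have "v \<notin> set xs" using vec.span_base by blast
    ultimately show "xs @ [v] \<in> IL V (Suc m)"
      by (auto simp: IL_def vec.independent_insert)
  qed
  have inj: "inj_on (\<lambda>(xs,v). xs @ [v]) (SIGMA xs:IL V m. V - vec.span (set xs))"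
    by (rule inj_onI) auto
  have cd: "card (V - vec.span (set xs)) = q ^ vec.dim V - q ^ m" if "xs \<in> IL V m" for xs
  proof -
    have "vec.span (set xs) \<subseteq> V" using that assms by (auto simp: IL_def vec.span_minimal)
    moreover have "card (vec.span (set xs)) = q ^ m"
      using that card_span_indep[of "set xs"] by (auto simp: IL_def q_def distinct_card)
    ultimately show ?thesis using card_subspace[OF assms] by (simp add: card_Diff_subset q_def)
  qed
  have "card (IL V (Suc m)) = (\<Sum>xs\<in>IL V m. card (V - vec.span (set xs)))"
  proof -
    have "IL V m \<subseteq> {xs. set xs \<subseteq> UNIV \<and> length xs = m}" by (auto simp: IL_def)
    then have "finite (IL V m)" by (rule finite_subset) (rule finite_lists_length_eq, simp)
    then show ?thesis unfolding eq card_image[OF inj] by (simp add: card_SigmaI)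
  qed
  also have "\<dots> = card (IL V m) * (q ^ vec.dim V - q ^ m)" using cd by simp
  finally show ?case using Suc.IH by (simp add: q_def)
qed

lemma IL_span:
  fixes W :: "('a::{field,finite} ^ 'n) set"
  assumes "vec.subspace W" "vec.dim W = m" "xs \<in> IL W m"
  shows "vec.span (set xs) = W"
proof -
  have x: "set xs \<subseteq> W" "card (set xs) = vec.dim W" "vec.independent (set xs)"
    using assms by (auto simp: IL_def distinct_card)
  then have "W \<subseteq> vec.span (set xs)" using vec.card_eq_dim[of "set xs" W] by simp
  moreover have "vec.span (set xs) \<subseteq> W" using x assms by (simp add: vec.span_minimal)
  ultimately show ?thesis by blast
qed

lemma card_Sub_mult:
  fixes V :: "('a::{field,finite} ^ 'n) set"
  assumes "vec.subspace V"
  shows "card {W. vec.subspace W \<and> vec.dim W = m \<and> W \<subseteq> V} * (\<Prod>i<m. CARD('a) ^ m - CARD('a) ^ i)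
         = (\<Prod>i<m. CARD('a) ^ vec.dim V - CARD('a) ^ i)"
proof -
  define Sub where "Sub = {W. vec.subspace W \<and> vec.dim W = m \<and> W \<subseteq> V}"
  have fin: "finite (IL W m)" for W :: "('a ^ 'n) set"
  proof -
    have "IL W m \<subseteq> {xs. set xs \<subseteq> UNIV \<and> length xs = m}" by (auto simp: IL_def)
    then show "finite (IL W m)" by (rule finite_subset) (rule finite_lists_length_eq, simp)
  qed
  have eq: "IL V m = (\<Union>W\<in>Sub. IL W m)"
  proof
    show "IL V m \<subseteq> (\<Union>W\<in>Sub. IL W m)"
    proof
      fix xs assume xs: "xs \<in> IL V m"
      have "vec.span (set xs) \<in> Sub" using xs assms
        by (auto simp: Sub_def IL_def vec.dim_eq_card_independent distinct_card vec.span_minimal)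
      moreover have "xs \<in> IL (vec.span (set xs)) m" using xs
        by (auto simp: IL_def vec.span_base)
      ultimately show "xs \<in> (\<Union>W\<in>Sub. IL W m)" by blast
    qed
  next
    show "(\<Union>W\<in>Sub. IL W m) \<subseteq> IL V m" by (auto simp: Sub_def IL_def)
  qed
  have disj: "\<forall>W\<in>Sub. \<forall>W'\<in>Sub. W \<noteq> W' \<longrightarrow> IL W m \<inter> IL W' m = {}"
    using IL_span unfolding Sub_def by blast
  have "card (IL V m) = (\<Sum>W\<in>Sub. card (IL W m))"
    unfolding eq by (rule card_UN_disjoint) (use disj fin in auto)
  also have "\<dots> = (\<Sum>W\<in>Sub. (\<Prod>i<m. CARD('a) ^ m - CARD('a) ^ i))"
    by (rule sum.cong) (auto simp: Sub_def card_IL)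
  finally show ?thesis using card_IL[OF assms] by (simp add: Sub_def)
qed

lemma prod_pow_diff:
  fixes Q :: real
  assumes "m \<le> d"
  shows "(\<Prod>i<m. Q ^ d - Q ^ i) = Q ^ (\<Sum>i<m. i) * (\<Prod>i<m. Q ^ (d - i) - 1)"
proof -
  have "(\<Prod>i<m. Q ^ d - Q ^ i) = (\<Prod>i<m. Q ^ i * (Q ^ (d - i) - 1))"
  proof (rule prod.cong)
    fix i assume "i \<in> {..<m}"
    then have "i + (d - i) = d" using assms by simp
    then have "Q ^ d = Q ^ i * Q ^ (d - i)" by (metis power_add)
    then show "Q ^ d - Q ^ i = Q ^ i * (Q ^ (d - i) - 1)" by (simp add: algebra_simps)
  qed simp
  also have "\<dots> = Q ^ (\<Sum>i<m. i) * (\<Prod>i<m. Q ^ (d - i) - 1)"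
    by (simp add: prod.distrib power_sum)
  finally show ?thesis .
qed

lemma prod_rev_pow:
  fixes Q :: real
  shows "(\<Prod>i<m. Q ^ (m - i) - 1) = (\<Prod>i<m. Q ^ (i + 1) - 1)"
proof -
  have "(\<Prod>i<m. Q ^ (m - i) - 1) = (\<Prod>i<m. (\<lambda>j. Q ^ (j + 1) - 1) (m - Suc i))"
    by (rule prod.cong) (auto simp: Suc_diff_Suc)
  also have "\<dots> = (\<Prod>i<m. Q ^ (i + 1) - 1)" by (rule prod.nat_diff_reindex)
  finally show ?thesis .
qed

lemma denom_pos:
  fixes Q :: real
  assumes "Q > 1"
  shows "(\<Prod>i<m. Q ^ (i + 1) - 1) > 0"
proof (intro prod_pos ballI)
  fix i assume "i \<in> {..<m}"
  have "1 < Q ^ (i + 1)" using assms by (intro one_less_power) simp_all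
  then show "0 < Q ^ (i + 1) - 1" by simp
qed

lemma card_field_ge2: "CARD('a::{field,finite}) \<ge> 2"
proof -
  have "card {0::'a, 1} = 2" by simp
  moreover have "card {0::'a, 1} \<le> CARD('a)" by (rule card_mono) simp_all
  ultimately show ?thesis by simp
qed

lemma card_Sub_gauss:
  fixes V :: "('a::{field,finite} ^ 'n) set"
  assumes "vec.subspace V" "m \<le> vec.dim V"
  shows "real (card {W. vec.subspace W \<and> vec.dim W = m \<and> W \<subseteq> V})
         = gauss_binom (real CARD('a)) (vec.dim V) m"
proof -
  define Q where "Q = real CARD('a)"
  define d where "d = vec.dim V"
  define c where "c = real (card {W. vec.subspace W \<and> vec.dim W = m \<and> W \<subseteq> V})"
  have q2: "CARD('a) \<ge> 2" by (rule card_field_ge2)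
  then have Q1: "Q > 1" by (simp add: Q_def)
  have nat: "card {W. vec.subspace W \<and> vec.dim W = m \<and> W \<subseteq> V} * (\<Prod>i<m. CARD('a) ^ m - CARD('a) ^ i)
         = (\<Prod>i<m. CARD('a) ^ d - CARD('a) ^ i)" using card_Sub_mult[OF assms(1)] by (simp add: d_def)
  have "c * (\<Prod>i<m. Q ^ m - Q ^ i) = (\<Prod>i<m. Q ^ d - Q ^ i)"
  proof -
    have "real (card {W. vec.subspace W \<and> vec.dim W = m \<and> W \<subseteq> V} * (\<Prod>i<m. CARD('a) ^ m - CARD('a) ^ i))
       = real (\<Prod>i<m. CARD('a) ^ d - CARD('a) ^ i)" using nat by simp
    moreover have "real (\<Prod>i<m. CARD('a) ^ m - CARD('a) ^ i) = (\<Prod>i<m. Q ^ m - Q ^ i)"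
      unfolding of_nat_prod Q_def
      by (rule prod.cong) (use q2 in \<open>auto simp: of_nat_diff power_increasing\<close>)
    moreover have "real (\<Prod>i<m. CARD('a) ^ d - CARD('a) ^ i) = (\<Prod>i<m. Q ^ d - Q ^ i)"
      unfolding of_nat_prod Q_def
      by (rule prod.cong) (use q2 assms(2) in \<open>auto simp: of_nat_diff power_increasing d_def\<close>)
    ultimately show ?thesis by (simp add: c_def)
  qed
  then have "c * (Q ^ (\<Sum>i<m. i) * (\<Prod>i<m. Q ^ (i + 1) - 1)) = Q ^ (\<Sum>i<m. i) * (\<Prod>i<m. Q ^ (d - i) - 1)"
    using prod_pow_diff[of m m Q] prod_pow_diff[of m d Q] assms(2) prod_rev_pow[of Q m]
    by (simp add: d_def)
  moreover define X where "X = Q ^ (\<Sum>i<m. i)"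
  moreover define D where "D = (\<Prod>i<m. Q ^ (i + 1) - 1)"
  moreover define N where "N = (\<Prod>i<m. Q ^ (d - i) - 1)"
  ultimately have e: "X * (c * D) = X * N" by (simp add: algebra_simps)
  have "X \<noteq> 0" using Q1 by (simp add: X_def)
  with e have "c * D = N" by simp
  moreover have "D \<noteq> 0" using denom_pos[OF Q1, of m] unfolding D_def by linarith
  ultimately have "c = N / D" by (simp add: field_simps)
  then have "c = (\<Prod>i<m. Q ^ (d - i) - 1) / (\<Prod>i<m. Q ^ (i + 1) - 1)"
    by (simp add: N_def D_def)
  then show ?thesis by (simp add: c_def gauss_binom_def Q_def d_def)
qed

lemma gauss_Suc:
  "gauss_binom Q n (Suc k) = gauss_binom Q n k * ((Q ^ (n - k) - 1) / (Q ^ (k + 1) - 1))"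
  by (simp add: gauss_binom_def)

lemma gauss_nonzero:
  fixes Q :: real
  assumes "Q > 1" "k \<le> n"
  shows "gauss_binom Q n k \<noteq> 0"
proof -
  have "(\<Prod>i<k. Q ^ (n - i) - 1) > 0"
  proof (intro prod_pos ballI)
    fix i assume "i \<in> {..<k}"
    then have "n - i \<noteq> 0" using assms by auto
    then have "1 < Q ^ (n - i)" using assms by (intro one_less_power) simp_all
    then show "0 < Q ^ (n - i) - 1" by simp
  qed
  moreover have "(\<Prod>i<k. Q ^ (i + 1) - 1) > 0" by (rule denom_pos[OF assms(1)])
  ultimately show ?thesis unfolding gauss_binom_def
    by (metis divide_eq_0_iff less_irrefl)
qed

lemma card_pts_real:
  fixes S :: "('a::{field,finite} ^ 'n) set"
  assumes "vec.subspace S"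
  shows "real (card {p \<in> (proj_points :: ('a ^ 'n) set set). p \<subseteq> S})
          = (real CARD('a) ^ vec.dim S - 1) / (real CARD('a) - 1)"
proof -
  have q2: "CARD('a) \<ge> 2" by (rule card_field_ge2)
  have e: "card {p \<in> (proj_points :: ('a ^ 'n) set set). p \<subseteq> S} * (CARD('a) - 1) = CARD('a) ^ vec.dim S - 1"
    using card_points_in[OF assms] card_subspace[OF assms] by simp
  have "1 \<le> CARD('a) ^ vec.dim S" using q2 by simp
  then have "real (card {p \<in> (proj_points :: ('a ^ 'n) set set). p \<subseteq> S}) * (real CARD('a) - 1)
        = real CARD('a) ^ vec.dim S - 1"
    using arg_cong[OF e, of real] q2 by (simp add: of_nat_diff)
  moreover have "real CARD('a) - 1 \<noteq> 0" using q2 by simp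
  ultimately show ?thesis by (simp add: field_simps)
qed

theorem theorem3p5:
  fixes H :: "('a::{field,finite} ^ 'n) set" and n k :: nat and L :: "('a ^ 'n) set set"
    and x :: real
  assumes "CARD('n) = Suc n"
    and "1 \<le> k" and "k \<le> n - 1"
    and "H \<in> proj_spaces (n - 1)"
    and "CL_aff H k L"
    and "x = real (card L) / gauss_binom (real CARD('a)) n k"
  shows "\<exists>L' :: ('a ^ 'n) set set. CL_proj k L' \<and>
           real (card L') / gauss_binom (real CARD('a)) n k
             = x + (real CARD('a) ^ (n - k) - 1) / (real CARD('a) ^ (k + 1) - 1)"
proof -
  define Q where "Q = real CARD('a)"
  have q2: "CARD('a) \<ge> 2" by (rule card_field_ge2)
  then have Q1: "Q > 1" by (simp add: Q_def)
  have kn: "Suc k \<le> n" using assms(2,3) by simp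
  have sH: "vec.subspace H" and dH: "vec.dim H = n"
    using assms(4) kn by (auto simp: proj_spaces_def)
  obtain f :: "('a ^ 'n) set \<Rightarrow> real" where
    LA: "L \<subseteq> aff_spaces H k" and
    f: "\<And>K. K \<in> aff_spaces H k \<Longrightarrow>
        (if K \<in> L then 1 else 0) = (\<Sum>p \<in> {p \<in> aff_spaces H 0. p \<subseteq> K}. f p)"
    using assms(5) unfolding CL_aff_def by blast
  define Hk where "Hk = {K \<in> (proj_spaces k :: ('a ^ 'n) set set). K \<subseteq> H}"
  define L' where "L' = L \<union> Hk"
  have Hk_eq: "Hk = {W. vec.subspace W \<and> vec.dim W = Suc k \<and> W \<subseteq> H}"
    by (auto simp: Hk_def proj_spaces_def)
  have cHk: "real (card Hk) = gauss_binom Q n (Suc k)"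
    unfolding Hk_eq using card_Sub_gauss[OF sH, of "Suc k"] kn dH by (simp add: Q_def)
  have disj: "L \<inter> Hk = {}" using LA by (auto simp: aff_spaces_def Hk_def)
  have cL': "card L' = card L + card Hk" unfolding L'_def using disj by (simp add: card_Un_disjoint)
  have G0: "gauss_binom Q n k \<noteq> 0" using gauss_nonzero[OF Q1, of k n] kn by simp
  have param: "real (card L') / gauss_binom Q n k
      = x + (Q ^ (n - k) - 1) / (Q ^ (k + 1) - 1)"
    using G0 by (simp add: cL' cHk gauss_Suc assms(6) Q_def add_divide_distrib)
  define a1 where "a1 = (Q ^ (k + 1) - 1) / (Q - 1)"
  define a0 where "a0 = (Q ^ k - 1) / (Q - 1)"
  have "Q ^ k < Q ^ (k + 1)" using Q1 by (intro power_strict_increasing) simp_all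
  then have a01: "a0 < a1" using Q1 by (simp add: a0_def a1_def divide_strict_right_mono)
  have "1 < Q ^ (k + 1)" using Q1 by (intro one_less_power) simp_all
  then have a1p: "a1 > 0" using Q1 by (simp add: a1_def)
  define c where "c = 1 / a1"
  define d where "d = c * a0 / (a1 - a0)"
  define g where "g p = (if p \<subseteq> H then c else f p - d)" for p :: "('a ^ 'n) set"
  define pts where "pts S = {p \<in> (proj_points :: ('a ^ 'n) set set). p \<subseteq> S}" for S
  have CL: "CL_proj k L'"
    unfolding CL_proj_def
  proof (intro conjI exI[of _ g] ballI)
    show "L' \<subseteq> proj_spaces k" using LA by (auto simp: L'_def Hk_def aff_spaces_def)
  next
    fix K :: "('a ^ 'n) set" assume K: "K \<in> proj_spaces k"
    have sK: "vec.subspace K" and dK: "vec.dim K = Suc k" using K by (auto simp: proj_spaces_def)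
    have cK: "real (card (pts K)) = a1" using card_pts_real[OF sK] dK by (simp add: pts_def a1_def Q_def)
    have ptsK: "pts K = {p \<in> proj_points. p \<subseteq> K}" by (simp add: pts_def)
    show "(if K \<in> L' then 1 else 0) = (\<Sum>p \<in> {p \<in> proj_points. p \<subseteq> K}. g p)"
    proof (cases "K \<subseteq> H")
      case True
      then have "K \<in> L'" using K by (simp add: L'_def Hk_def)
      moreover have "(\<Sum>p \<in> pts K. g p) = (\<Sum>p \<in> pts K. c)"
        using True by (intro sum.cong) (auto simp: pts_def g_def)
      ultimately show ?thesis using cK a1p ptsK by (simp add: c_def)
    next
      case False
      then have KA: "K \<in> aff_spaces H k" using K by (simp add: aff_spaces_def)
      have "K \<notin> Hk" using False by (simp add: Hk_def)
      then have iff: "(K \<in> L') = (K \<in> L)" by (simp add: L'_def)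
      define A where "A = {p \<in> aff_spaces H 0. p \<subseteq> K}"
      define B where "B = pts (K \<inter> H)"
      have split: "pts K = A \<union> B" "A \<inter> B = {}"
        by (auto simp: A_def B_def pts_def aff_spaces_def)
      have sKH: "vec.subspace (K \<inter> H)" using sK sH by (rule vec.subspace_inter)
      have dKH: "vec.dim (K \<inter> H) = k"
        using dim_inter_hyperplane[OF assms(1) sK sH dH False] dK by simp
      have cB: "real (card B) = a0" using card_pts_real[OF sKH] dKH by (simp add: B_def pts_def a0_def Q_def)
      have cA: "real (card A) = a1 - a0"
      proof -
        have "card (pts K) = card A + card B" unfolding split(1) using split(2)
          by (simp add: card_Un_disjoint)
        then show ?thesis using cK cB by simp
      qed
      have "(\<Sum>p \<in> pts K. g p) = (\<Sum>p \<in> A. g p) + (\<Sum>p \<in> B. g p)"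
        unfolding split(1) using split(2) by (simp add: sum.union_disjoint)
      also have "(\<Sum>p \<in> A. g p) = (\<Sum>p \<in> A. f p - d)"
        by (intro sum.cong) (auto simp: A_def g_def aff_spaces_def)
      also have "\<dots> = (if K \<in> L then 1 else 0) - d * (a1 - a0)"
        using f[OF KA] cA by (simp add: sum_subtractf A_def)
      also have "(\<Sum>p \<in> B. g p) = (\<Sum>p \<in> B. c)"
        by (intro sum.cong) (auto simp: B_def pts_def g_def)
      also have "\<dots> = c * a0" using cB by simp
      finally have "(\<Sum>p \<in> pts K. g p) = (if K \<in> L then 1 else 0) - d * (a1 - a0) + c * a0" .
      moreover have "d * (a1 - a0) = c * a0" using a01 by (simp add: d_def)
      ultimately show ?thesis using iff ptsK by simp
    qed
  qed
  show ?thesis using CL param by (auto simp: Q_def)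
qed

end
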